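(* Let $\{x_k\}$ be generated by the Subgradient-InexP method with the exogenous stepsize rule, under the standing assumptions, and assume $\{x_k\}$ converges to a point $x_*\in\Omega^*$. Then there is $c>0$ with $\|s_k\|\le c$ for all $k$, and with $\Gamma:=\max\{1,c\}$ and $\rho:=\nu+2\mu$, $\nu=\frac{1+2\bar\gamma}{1-2\bar\lambda}$, for every $N\in\mathbb{N}$, $$\min\{f(x_k)-f^*:\ k=0,1,\dots,N\}\le \Gamma\,\frac{\|x_0-x_*\|^2+\rho\sum_{k=0}^N\alpha_k^2}{2\sum_{k=0}^N\alpha_k}.$$
   Context: Problem: minimize a convex $f:\mathbb{R}^n\to\mathbb{R}$ over a nonempty closed convex $C\subset\mathbb{R}^n$; $f^*:=\inf_{x\in C}f(x)$, $\Omega^*$ the set of minimizers. For $\epsilon\ge0$, $\partial_\epsilon f(x):=\{s: f(y)\ge f(x)+\langle s,y-x\rangle-\epsilon\ \forall y\}$. Relative error tolerance function: any $\varphi_{\gamma,\theta,\lambda}:(\mathbb{R}^n)^3\to[0,\infty)$ with $\varphi_{\gamma,\theta,\lambda}(u,v,w)\le\gamma\|v-u\|^2+\theta\|w-v\|^2+\lambda\|w-u\|^2$; for $u\in C$, $\mathcal{P}_C(\varphi_{\gamma,\theta,\lambda},u,v):=\{w\in C:\langle v-w,z-w\rangle\le\varphi_{\gamma,\theta,\lambda}(u,v,w)\ \forall z\in C\}$. Subgradient-InexP method: $x_0\in C$; at iteration $k$, if $0\in\partial f(x_k)$ stop; otherwise choose nonzero $s_k\in\partial_{\epsilon_k}f(x_k)$,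 stepsize $t_k>0$, and $x_{k+1}\in\mathcal{P}_C(\varphi_{\gamma_k,\theta_k,\lambda_k},x_k,x_k-t_ks_k)$. Standing assumptions: $\gamma_k\in[0,\bar\gamma)$, $\theta_k\in[0,\bar\theta)$, $\lambda_k\in[0,\bar\lambda)$ with $\bar\gamma\ge0$, $\bar\theta,\bar\lambda\in[0,1/2)$; the sequence is infinite. Exogenous stepsize rule: $\mu\ge0$; $\{\alpha_k\}$, $\{\epsilon_k\}$ nonnegative, $\{\epsilon_k\}$ nonincreasing, $\sum_k\alpha_k=+\infty$, $\sum_k\alpha_k^2<+\infty$, $\epsilon_k\le\mu\alpha_k$; $t_k:=\alpha_k/\eta_k$, $\eta_k:=\max\{1,\|s_k\|\}$. *)

theory Defs
  imports "HOL-Analysis.Analysis"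
begin

definition eps_subdiff :: "('a::real_inner \<Rightarrow> real) \<Rightarrow> real \<Rightarrow> 'a \<Rightarrow> 'a set" where
  "eps_subdiff f \<epsilon> x = {s. \<forall>y. f y \<ge> f x + inner s (y - x) - \<epsilon>}"

definition subdiff :: "('a::real_inner \<Rightarrow> real) \<Rightarrow> 'a \<Rightarrow> 'a set" where
  "subdiff f x = eps_subdiff f 0 x"

definition opt_val :: "('a \<Rightarrow> real) \<Rightarrow> 'a set \<Rightarrow> real" where
  "opt_val f C = Inf (f ` C)"

definition opt_set :: "('a \<Rightarrow> real) \<Rightarrow> 'a set \<Rightarrow> 'a set" where
  "opt_set f C = {x \<in> C. \<forall>y\<in>C. f x \<le> f y}"

definition rel_err_tol :: "real \<Rightarrow> real \<Rightarrow> real \<Rightarrow> ('a::real_normed_vector \<Rightarrow> 'a \<Rightarrow> 'a \<Rightarrow> real) \<Rightarrow> bool" where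
  "rel_err_tol \<gamma> \<theta> lam \<phi> \<longleftrightarrow>
     (\<forall>u v w. 0 \<le> \<phi> u v w \<and>
        \<phi> u v w \<le> \<gamma> * (norm (v - u))\<^sup>2 + \<theta> * (norm (w - v))\<^sup>2 + lam * (norm (w - u))\<^sup>2)"

definition inexact_proj :: "'a::real_inner set \<Rightarrow> ('a \<Rightarrow> 'a \<Rightarrow> 'a \<Rightarrow> real) \<Rightarrow> 'a \<Rightarrow> 'a \<Rightarrow> 'a set" where
  "inexact_proj C \<phi> u v = {w \<in> C. \<forall>z\<in>C. inner (v - w) (z - w) \<le> \<phi> u v w}"

end

theory Submission
  imports Defs
begin

lemma proj_step:
  fixes u v w z :: "'a::real_inner"
  assumes tol: "rel_err_tol g th l \<phi>"
    and w: "w \<in> inexact_proj C \<phi> u v" and uC: "u \<in> C" and zC: "z \<in> C"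
    and g: "0 \<le> g" "g \<le> gb" and th: "th < 1/2" and l: "0 \<le> l" "l \<le> lb" "lb < 1/2"
  shows "(norm (w - z))\<^sup>2 \<le> (norm (v - z))\<^sup>2 + ((1 + 2*gb)/(1 - 2*lb) - 1) * (norm (v - u))\<^sup>2"
proof -
  have wi: "\<And>z. z \<in> C \<Longrightarrow> inner (v - w) (z - w) \<le> \<phi> u v w" using w by (auto simp: inexact_proj_def)
  have phi: "\<phi> u v w \<le> g * (norm (v - u))\<^sup>2 + th * (norm (w - v))\<^sup>2 + l * (norm (w - u))\<^sup>2"
    using tol by (auto simp: rel_err_tol_def)
  have id1: "inner (v - w) (u - w) = ((norm (v - w))\<^sup>2 + (norm (u - w))\<^sup>2 - (norm (v - u))\<^sup>2)/2"
    using dot_norm_neg[of "v - w" "u - w"] by simp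
  have id2: "inner (v - w) (z - w) = ((norm (v - w))\<^sup>2 + (norm (z - w))\<^sup>2 - (norm (v - z))\<^sup>2)/2"
    using dot_norm_neg[of "v - w" "z - w"] by simp
  have n1: "norm (w - v) = norm (v - w)" "norm (w - u) = norm (u - w)" "norm (w - z) = norm (z - w)"
    by (simp_all add: norm_minus_commute)
  define A where "A = (norm (v - w))\<^sup>2"
  define B where "B = (norm (u - w))\<^sup>2"
  define D where "D = (norm (v - u))\<^sup>2"
  have A0: "A \<ge> 0" "B \<ge> 0" "D \<ge> 0" by (simp_all add: A_def B_def D_def)
  have "(1/2 - th) * A + (1/2 - l) * B \<le> (1/2 + g) * D"
    using wi[OF uC] phi id1 n1 unfolding A_def B_def D_def by (simp add: algebra_simps)
  hence "(1/2 - l) * B \<le> (1/2 + g) * D" using th A0 by (smt (verit) mult_nonneg_nonneg)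
  hence "(1 - 2*l) * B \<le> (1 + 2*g) * D" by (simp add: algebra_simps)
  hence B1: "B \<le> (1 + 2*g) * D / (1 - 2*l)" using l by (simp add: pos_le_divide_eq mult.commute)
  have "(1 + 2*g) * D / (1 - 2*l) \<le> (1 + 2*gb) * D / (1 - 2*lb)"
    using l g A0 by (intro frac_le mult_right_mono) auto
  with B1 have B2: "B \<le> (1 + 2*gb) * D / (1 - 2*lb)" by linarith
  have phi': "\<phi> u v w \<le> g * D + th * A + l * B"
    using phi n1 unfolding A_def B_def D_def by simp
  have id2': "2 * inner (v - w) (z - w) = A + (norm (z - w))\<^sup>2 - (norm (v - z))\<^sup>2"
    using id2 unfolding A_def by simp
  have thA: "2 * (th * A) \<le> A" using th A0 mult_right_mono[of "2*th" 1 A] by simp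
  have main0: "(norm (z - w))\<^sup>2 \<le> (norm (v - z))\<^sup>2 + 2*(g*D) + 2*(l*B)"
    using wi[OF zC] phi' id2' thA by linarith
  hence main: "(norm (z - w))\<^sup>2 \<le> (norm (v - z))\<^sup>2 + 2*g*D + 2*l*B" by (simp add: mult.assoc)
  have "(1 + 2*g) * D + 2*l*((1 + 2*gb) * D / (1 - 2*lb)) \<le> (1 + 2*gb) * D + 2*lb*((1 + 2*gb) * D / (1 - 2*lb))"
    using g l A0 by (intro add_mono mult_mono mult_right_mono) (auto intro!: divide_nonneg_pos)
  also have "\<dots> = (1 + 2*gb)/(1 - 2*lb) * D" using l by (simp add: field_simps)
  finally have c1: "(1 + 2*g) * D + 2*l*((1 + 2*gb) * D / (1 - 2*lb)) \<le> (1 + 2*gb)/(1 - 2*lb) * D" .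
  have lB: "l*B \<le> l*((1 + 2*gb) * D / (1 - 2*lb))" by (rule mult_left_mono[OF B2 l(1)])
  have e: "(1 + 2*g) * D + 2*l*((1 + 2*gb) * D / (1 - 2*lb)) = D + 2*(g*D) + 2*(l*((1 + 2*gb) * D / (1 - 2*lb)))"
    by (simp add: algebra_simps)
  have "(norm (z - w))\<^sup>2 \<le> (norm (v - z))\<^sup>2 + (1 + 2*gb)/(1 - 2*lb) * D - D"
    using main0 c1 lB e by linarith
  then show ?thesis using A0 unfolding n1(3) D_def by (simp add: algebra_simps)
qed

theorem mainTheorem6:
  fixes f :: "'a::euclidean_space \<Rightarrow> real"
    and C :: "'a set"
    and x s :: "nat \<Rightarrow> 'a"
    and t \<alpha> \<epsilon> \<gamma> \<theta> lam :: "nat \<Rightarrow> real"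
    and \<phi> :: "nat \<Rightarrow> 'a \<Rightarrow> 'a \<Rightarrow> 'a \<Rightarrow> real"
    and \<gamma>bar \<theta>bar lambar \<mu> :: real
    and xstar :: 'a
  assumes f_convex: "convex_on UNIV f"
    and C_closed: "closed C" and C_convex: "convex C" and C_nonempty: "C \<noteq> {}"
    \<comment> \<open>standing assumptions on the tolerance parameters\<close>
    and bars: "0 \<le> \<gamma>bar" "0 \<le> \<theta>bar" "\<theta>bar < 1/2" "0 \<le> lambar" "lambar < 1/2"
    and params: "\<And>k. 0 \<le> \<gamma> k \<and> \<gamma> k < \<gamma>bar" "\<And>k. 0 \<le> \<theta> k \<and> \<theta> k < \<theta>bar"
                "\<And>k. 0 \<le> lam k \<and> lam k < lambar"
    and tol: "\<And>k. rel_err_tol (\<gamma> k) (\<theta> k) (lam k) (\<phi> k)"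
    \<comment> \<open>Subgradient-InexP iteration (infinite sequence)\<close>
    and x0: "x 0 \<in> C"
    and nostop: "\<And>k. 0 \<notin> subdiff f (x k)"
    and s_sub: "\<And>k. s k \<in> eps_subdiff f (\<epsilon> k) (x k)"
    and s_nz: "\<And>k. s k \<noteq> 0"
    and t_pos: "\<And>k. t k > 0"
    and step: "\<And>k. x (Suc k) \<in> inexact_proj C (\<phi> k) (x k) (x k - t k *\<^sub>R s k)"
    \<comment> \<open>exogenous stepsize rule\<close>
    and mu: "0 \<le> \<mu>"
    and alpha_nn: "\<And>k. 0 \<le> \<alpha> k" and eps_nn: "\<And>k. 0 \<le> \<epsilon> k"
    and eps_mono: "decseq \<epsilon>"
    and alpha_div: "\<not> summable \<alpha>"
    and alpha_sq: "summable (\<lambda>k. (\<alpha> k)\<^sup>2)"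
    and eps_le: "\<And>k. \<epsilon> k \<le> \<mu> * \<alpha> k"
    and t_def: "\<And>k. t k = \<alpha> k / max 1 (norm (s k))"
    \<comment> \<open>convergence to a solution\<close>
    and conv: "x \<longlonglongrightarrow> xstar"
    and xstar_opt: "xstar \<in> opt_set f C"
  shows "\<exists>c>0. (\<forall>k. norm (s k) \<le> c) \<and>
           (\<forall>N. Min ((\<lambda>k. f (x k) - opt_val f C) ` {0..N})
              \<le> max 1 c * ((norm (x 0 - xstar))\<^sup>2
                   + ((1 + 2 * \<gamma>bar) / (1 - 2 * lambar) + 2 * \<mu>) * (\<Sum>k=0..N. (\<alpha> k)\<^sup>2))
                / (2 * (\<Sum>k=0..N. \<alpha> k)))"
proof -
  have xC: "x k \<in> C" for k
    by (induction k) (use x0 step in \<open>auto simp: inexact_proj_def\<close>)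
  from xstar_opt have xsC: "xstar \<in> C" and xsmin: "\<And>y. y \<in> C \<Longrightarrow> f xstar \<le> f y"
    by (auto simp: opt_set_def)
  have fstar: "opt_val f C = f xstar" unfolding opt_val_def
    by (rule cInf_eq_minimum) (use xsC xsmin in auto)
  define G where "G = (\<lambda>k. f (x k) - f xstar)"
  have G0: "G k \<ge> 0" for k using xsmin[OF xC[of k]] by (simp add: G_def)
  define D where "D = (\<lambda>k. (norm (x k - xstar))\<^sup>2)"
  define \<nu> where "\<nu> = (1 + 2 * \<gamma>bar) / (1 - 2 * lambar)"
  have \<nu>1: "\<nu> \<ge> 1" using bars by (simp add: \<nu>_def)
  define \<rho> where "\<rho> = \<nu> + 2 * \<mu>"
  have "bounded (range x)" by (rule convergent_imp_bounded[OF conv])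
  then obtain R where R: "\<And>k. norm (x k) \<le> R" by (auto simp: bounded_iff)
  have cont: "continuous_on UNIV f" by (rule convex_on_continuous) (auto simp: f_convex)
  have "compact (f ` cball 0 (R+1))"
    by (rule compact_continuous_image[OF continuous_on_subset[OF cont] compact_cball]) auto
  then have "bounded (f ` cball 0 (R+1))" by (rule compact_imp_bounded)
  then obtain B where B': "\<forall>y\<in>cball 0 (R+1). \<bar>f y\<bar> \<le> B" unfolding bounded_iff by auto
  have B: "\<And>y. y \<in> cball 0 (R+1) \<Longrightarrow> \<bar>f y\<bar> \<le> B" using B' by blast
  have xk_in: "x k \<in> cball 0 (R+1)" for k using R[of k] by simp
  have B0: "B \<ge> 0" using B[OF xk_in[of 0]] by simp
  define c where "c = 2 * B + \<epsilon> 0 + 1"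
  have c0: "c > 0" using B0 eps_nn[of 0] by (simp add: c_def)
  have sb: "norm (s k) \<le> c" for k
  proof -
    define n where "n = norm (s k)"
    have n0: "n > 0" using s_nz[of k] by (simp add: n_def)
    define y where "y = x k + (1 / n) *\<^sub>R s k"
    have "norm y \<le> norm (x k) + norm ((1 / n) *\<^sub>R s k)" unfolding y_def by (rule norm_triangle_ineq)
    also have "norm ((1 / n) *\<^sub>R s k) = 1" using n0 by (simp add: n_def)
    finally have "y \<in> cball 0 (R+1)" using R[of k] by simp
    hence fy: "\<bar>f y\<bar> \<le> B" by (rule B)
    have fx: "\<bar>f (x k)\<bar> \<le> B" by (rule B[OF xk_in])
    have "f y \<ge> f (x k) + inner (s k) (y - x k) - \<epsilon> k"
      using s_sub[of k] by (auto simp: eps_subdiff_def)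
    moreover have "inner (s k) (y - x k) = n"
      using n0 by (simp add: y_def n_def power2_norm_eq_inner[symmetric] power2_eq_square)
    moreover have "\<epsilon> k \<le> \<epsilon> 0" using decseqD[OF eps_mono, of 0 k] by simp
    ultimately show ?thesis using fy fx by (simp add: c_def n_def)
  qed
  define \<Gamma> where "\<Gamma> = max 1 c"
  have \<Gamma>1: "\<Gamma> \<ge> 1" by (simp add: \<Gamma>_def)
  have stepk: "2 * (\<alpha> k * G k) / \<Gamma> \<le> D k - D (Suc k) + \<rho> * (\<alpha> k)\<^sup>2" for k
  proof -
    define T where "T = t k"
    define n where "n = norm (s k)"
    define M where "M = max 1 n"
    have M1: "M \<ge> 1" by (simp add: M_def)
    have TM: "T = \<alpha> k / M" by (simp add: T_def M_def n_def t_def)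
    have T0: "T > 0" using t_pos[of k] by (simp add: T_def)
    have a0: "\<alpha> k \<ge> 0" by (rule alpha_nn)
    have MG: "M \<le> \<Gamma>" using sb[of k] by (auto simp: M_def \<Gamma>_def n_def)
    have Tn: "T * n \<le> \<alpha> k"
    proof -
      have "T * n = \<alpha> k * (n / M)" by (simp add: TM)
      also have "\<dots> \<le> \<alpha> k * 1" using M1 by (intro mult_left_mono a0) (auto simp: M_def)
      finally show ?thesis by simp
    qed
    have Tn0: "T * n \<ge> 0" using T0 by (simp add: n_def)
    have Tn2: "(T * n)\<^sup>2 \<le> (\<alpha> k)\<^sup>2" by (rule power_mono[OF Tn Tn0])
    have Ta: "T \<le> \<alpha> k"
    proof -
      have "T = \<alpha> k * (1 / M)" by (simp add: TM)
      also have "\<dots> \<le> \<alpha> k * 1" using M1 by (intro mult_left_mono a0) auto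
      finally show ?thesis by simp
    qed
    have Te: "T * \<epsilon> k \<le> \<mu> * (\<alpha> k)\<^sup>2"
    proof -
      have "T * \<epsilon> k \<le> \<alpha> k * \<epsilon> k" by (rule mult_right_mono[OF Ta eps_nn])
      also have "\<dots> \<le> \<alpha> k * (\<mu> * \<alpha> k)" by (rule mult_left_mono[OF eps_le a0])
      finally show ?thesis by (simp add: power2_eq_square algebra_simps)
    qed
    have TG: "\<alpha> k * G k / \<Gamma> \<le> T * G k"
    proof -
      have "\<alpha> k * G k / \<Gamma> \<le> \<alpha> k * G k / M"
        using M1 MG G0[of k] a0 by (intro divide_left_mono) auto
      thus ?thesis by (simp add: TM)
    qed
    have ps: "(norm (x (Suc k) - xstar))\<^sup>2 \<le> (norm ((x k - T *\<^sub>R s k) - xstar))\<^sup>2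
        + ((1 + 2*\<gamma>bar)/(1 - 2*lambar) - 1) * (norm ((x k - T *\<^sub>R s k) - x k))\<^sup>2"
      apply (rule proj_step[OF tol[of k] _ xC[of k] xsC])
      using step[of k] params[of k] bars by (auto simp: T_def)
    have nv: "norm ((x k - T *\<^sub>R s k) - x k) = T * n" using T0 by (simp add: n_def)
    have id: "inner (x k - xstar) (T *\<^sub>R s k) = (D k + (T * n)\<^sup>2 - (norm ((x k - T *\<^sub>R s k) - xstar))\<^sup>2) / 2"
      using dot_norm_neg[of "x k - xstar" "T *\<^sub>R s k"] T0
      by (simp add: D_def n_def algebra_simps power_mult_distrib)
    have sg: "f xstar \<ge> f (x k) + inner (s k) (xstar - x k) - \<epsilon> k"
      using s_sub[of k] by (auto simp: eps_subdiff_def)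
    have "inner (s k) (xstar - x k) = - inner (x k - xstar) (s k)"
      by (simp add: inner_commute inner_diff_right inner_diff_left)
    with sg have sg2: "inner (x k - xstar) (s k) \<ge> G k - \<epsilon> k" by (simp add: G_def)
    have "T * inner (x k - xstar) (s k) \<ge> T * (G k - \<epsilon> k)"
      using mult_left_mono[OF sg2, of T] T0 by simp
    hence ip: "inner (x k - xstar) (T *\<^sub>R s k) \<ge> T * G k - T * \<epsilon> k"
      by (simp add: algebra_simps)
    have nuT: "(\<nu> - 1) * (T * n)\<^sup>2 \<le> (\<nu> - 1) * (\<alpha> k)\<^sup>2"
      using \<nu>1 by (intro mult_left_mono Tn2) auto
    have ps2: "D (Suc k) \<le> (norm ((x k - T *\<^sub>R s k) - xstar))\<^sup>2 + (\<nu> - 1) * (T * n)\<^sup>2"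
      using ps unfolding nv \<nu>_def D_def .
    have "2 * (T * G k) \<le> D k - D (Suc k) + \<nu> * (\<alpha> k)\<^sup>2 + 2 * (T * \<epsilon> k)"
    proof -
      have id2: "2 * inner (x k - xstar) (T *\<^sub>R s k) = D k + (T * n)\<^sup>2 - (norm ((x k - T *\<^sub>R s k) - xstar))\<^sup>2"
        using id by simp
      have e: "(\<nu> - 1) * (\<alpha> k)\<^sup>2 = \<nu> * (\<alpha> k)\<^sup>2 - (\<alpha> k)\<^sup>2" by (simp add: algebra_simps)
      show ?thesis using ps2 id2 ip nuT e Tn2 by linarith
    qed
    moreover have "2 * (\<alpha> k * G k) / \<Gamma> = 2 * (\<alpha> k * G k / \<Gamma>)" by simp
    moreover have "\<rho> * (\<alpha> k)\<^sup>2 = \<nu> * (\<alpha> k)\<^sup>2 + 2 * (\<mu> * (\<alpha> k)\<^sup>2)" by (simp add: \<rho>_def algebra_simps)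
    ultimately show ?thesis using TG Te by linarith
  qed
  have sumk: "(\<Sum>k=0..N. 2 * (\<alpha> k * G k) / \<Gamma>) + D (Suc N) \<le> D 0 + \<rho> * (\<Sum>k=0..N. (\<alpha> k)\<^sup>2)" for N
  proof (induction N)
    case 0 then show ?case using stepk[of 0] by simp
  next
    case (Suc N) then show ?case using stepk[of "Suc N"] by (simp add: algebra_simps)
  qed
  show ?thesis
  proof (intro exI[of _ c] conjI allI c0 sb)
    fix N
    define m where "m = Min (G ` {0..N})"
    have mle: "m \<le> G k" if "k \<in> {0..N}" for k unfolding m_def using that by simp
    have apos: "\<alpha> k > 0" for k
    proof -
      have "max 1 (norm (s k)) > 0" by simp
      thus ?thesis using t_pos[of k] t_def[of k] alpha_nn[of k]
        by (metis divide_eq_0_iff less_eq_real_def)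
    qed
    have Sa: "(\<Sum>k=0..N. \<alpha> k) > 0" using apos by (intro sum_pos) auto
    have "m * (\<Sum>k=0..N. \<alpha> k) \<le> (\<Sum>k=0..N. \<alpha> k * G k)"
      unfolding sum_distrib_left using mle alpha_nn
      by (intro sum_mono) (metis mult.commute mult_right_mono)
    moreover have "(\<Sum>k=0..N. 2 * (\<alpha> k * G k) / \<Gamma>) = 2 * (\<Sum>k=0..N. \<alpha> k * G k) / \<Gamma>"
      by (simp add: sum_divide_distrib sum_distrib_left)
    moreover have "D (Suc N) \<ge> 0" by (simp add: D_def)
    ultimately have "2 * (m * (\<Sum>k=0..N. \<alpha> k)) / \<Gamma> \<le> D 0 + \<rho> * (\<Sum>k=0..N. (\<alpha> k)\<^sup>2)"
      using sumk[of N] \<Gamma>1 by (smt (verit) divide_right_mono)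
    hence "2 * (m * (\<Sum>k=0..N. \<alpha> k)) \<le> \<Gamma> * (D 0 + \<rho> * (\<Sum>k=0..N. (\<alpha> k)\<^sup>2))"
      using \<Gamma>1 by (simp add: pos_divide_le_eq mult.commute)
    hence "m \<le> \<Gamma> * (D 0 + \<rho> * (\<Sum>k=0..N. (\<alpha> k)\<^sup>2)) / (2 * (\<Sum>k=0..N. \<alpha> k))"
      using Sa by (simp add: pos_le_divide_eq algebra_simps)
    moreover have eqG: "(\<lambda>k. f (x k) - opt_val f C) = G" by (simp add: fstar G_def)
    hence "Min ((\<lambda>k. f (x k) - opt_val f C) ` {0..N}) = m" unfolding m_def by (simp only: eqG)
    ultimately show "Min ((\<lambda>k. f (x k) - opt_val f C) ` {0..N})
              \<le> max 1 c * ((norm (x 0 - xstar))\<^sup>2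
                   + ((1 + 2 * \<gamma>bar) / (1 - 2 * lambar) + 2 * \<mu>) * (\<Sum>k=0..N. (\<alpha> k)\<^sup>2))
                / (2 * (\<Sum>k=0..N. \<alpha> k))"
      by (simp only: \<Gamma>_def D_def \<rho>_def \<nu>_def)
  qed
qed

end
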